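(* Let $W_{4,n}$ be the $4$-regular Kn\"odel graph. If $n\in\{16,18,28,36\}$, then $W_{4,n}$ is $\gamma$-stable.
   Context: For an even integer $n\ge 2$ and $1\le\Delta\le\lfloor\log_2 n\rfloor$, the Kn\"odel graph $W_{\Delta,n}$ is the $\Delta$-regular bipartite graph on the $n$ vertices $(i,j)$, $i\in\{1,2\}$, $0\le j\le n/2-1$, in which for every $j$ the vertex $(1,j)$ is adjacent to the vertices $(2,(j+2^k-1)\bmod (n/2))$ for $k=0,1,\dots,\Delta-1$ (and there are no other edges). A set $D$ of vertices of a graph $G$ is dominating if every vertex not in $D$ is adjacent to a vertex of $D$; $\gamma(G)$ is the minimum size of a dominating set. A graph $G$ is $\gamma$-stable if $\gamma(G-u)=\gamma(G)$ for every vertex $u$ of $G$, where $G-u$ is the graph obtained by deleting $u$. *)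

theory Defs
  imports Main
begin

text \<open>Graphs are given by a finite vertex set V and a symmetric adjacency
relation adj; the graph G - u is (V - {u}, adj) (adjacency restricted to the
remaining vertices).\<close>

definition knodel_vertices :: "nat \<Rightarrow> (nat \<times> nat) set" where
  "knodel_vertices n = {1,2} \<times> {0..<n div 2}"

definition knodel_adj :: "nat \<Rightarrow> nat \<Rightarrow> (nat \<times> nat) \<Rightarrow> (nat \<times> nat) \<Rightarrow> bool" where
  "knodel_adj \<Delta> n x y \<longleftrightarrow>
     x \<in> knodel_vertices n \<and> y \<in> knodel_vertices n \<and>
     ((fst x = 1 \<and> fst y = 2 \<and> (\<exists>k<\<Delta>. snd y = (snd x + 2^k - 1) mod (n div 2))) \<or>
      (fst y = 1 \<and> fst x = 2 \<and> (\<exists>k<\<Delta>. snd x = (snd y + 2^k - 1) mod (n div 2))))"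

definition dominating :: "'a set \<Rightarrow> ('a \<Rightarrow> 'a \<Rightarrow> bool) \<Rightarrow> 'a set \<Rightarrow> bool" where
  "dominating V adj D \<longleftrightarrow> D \<subseteq> V \<and> (\<forall>v\<in>V - D. \<exists>d\<in>D. adj v d)"

definition domination_number :: "'a set \<Rightarrow> ('a \<Rightarrow> 'a \<Rightarrow> bool) \<Rightarrow> nat" where
  "domination_number V adj = Min (card ` {D. dominating V adj D})"

definition gamma_stable :: "'a set \<Rightarrow> ('a \<Rightarrow> 'a \<Rightarrow> bool) \<Rightarrow> bool" where
  "gamma_stable V adj \<longleftrightarrow>
     (\<forall>u\<in>V. domination_number (V - {u}) adj = domination_number V adj)"

end

theory Submission
  imports Defs "HOL-Number_Theory.Cong"
begin

lemma dom_image: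
  assumes bij: "bij_betw f V W"
    and pres: "\<And>x y. x \<in> V \<Longrightarrow> y \<in> V \<Longrightarrow> adj' (f x) (f y) = adj x y"
    and d: "dominating V adj D"
  shows "dominating W adj' (f ` D) \<and> card (f ` D) = card D"
proof -
  have DV: "D \<subseteq> V" using d by (simp add: dominating_def)
  have inj: "inj_on f V" and im: "f ` V = W" using bij by (auto simp: bij_betw_def)
  have "card (f ` D) = card D" using inj DV by (meson card_image inj_on_subset)
  moreover have "dominating W adj' (f ` D)"
    unfolding dominating_def
  proof (intro conjI ballI)
    show "f ` D \<subseteq> W" using DV im by blast
    fix w assume w: "w \<in> W - f ` D"
    then obtain v where v: "v \<in> V" "w = f v" using im by blast
    have "v \<notin> D" using w v by blast
    then obtain dd where "dd \<in> D" "adj v dd" using d v unfolding dominating_def by blast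
    then show "\<exists>d\<in>f ` D. adj' w d" using pres[of v dd] v DV by blast
  qed
  ultimately show ?thesis by blast
qed

lemma dn_bij:
  assumes bij: "bij_betw f V W"
    and pres: "\<And>x y. x \<in> V \<Longrightarrow> y \<in> V \<Longrightarrow> adj' (f x) (f y) = adj x y"
  shows "domination_number W adj' = domination_number V adj"
proof -
  define g where "g = inv_into V f"
  have bg: "bij_betw g W V" using bij_betw_inv_into[OF bij] g_def by simp
  have fg: "\<And>x. x \<in> W \<Longrightarrow> f (g x) = x" using bij g_def
    by (simp add: bij_betw_inv_into_right)
  have pres': "\<And>x y. x \<in> W \<Longrightarrow> y \<in> W \<Longrightarrow> adj (g x) (g y) = adj' x y"
  proof -
    fix x y assume "x \<in> W" "y \<in> W"
    then show "adj (g x) (g y) = adj' x y"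
      using pres[of "g x" "g y"] fg bg by (metis bij_betw_apply)
  qed
  have "card ` {D. dominating V adj D} \<subseteq> card ` {D. dominating W adj' D}"
  proof
    fix c assume "c \<in> card ` {D. dominating V adj D}"
    then obtain D where "dominating V adj D" "c = card D" by blast
    then show "c \<in> card ` {D. dominating W adj' D}"
      using dom_image[where adj'=adj' and adj=adj, OF bij pres] by (metis (mono_tags, lifting) image_eqI mem_Collect_eq)
  qed
  moreover have "card ` {D. dominating W adj' D} \<subseteq> card ` {D. dominating V adj D}"
  proof
    fix c assume "c \<in> card ` {D. dominating W adj' D}"
    then obtain D where "dominating W adj' D" "c = card D" by blast
    then show "c \<in> card ` {D. dominating V adj D}"
      using dom_image[where adj'=adj and adj=adj', OF bg pres'] by (metis (mono_tags, lifting) image_eqI mem_Collect_eq)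
  qed
  ultimately show ?thesis unfolding domination_number_def by (metis subset_antisym)
qed

lemma dn_le:
  assumes "finite V" "dominating V adj D"
  shows "domination_number V adj \<le> card D"
proof -
  have "finite {D. dominating V adj D}"
    using assms(1) by (rule finite_subset[rotated, OF finite_Pow_iff[THEN iffD2]]) (auto simp: dominating_def)
  then show ?thesis unfolding domination_number_def using assms(2) by (simp add: Min_le)
qed

lemma dn_ge:
  assumes "finite V" "\<And>D. dominating V adj D \<Longrightarrow> k \<le> card D"
  shows "k \<le> domination_number V adj"
proof -
  have fin: "finite {D. dominating V adj D}"
    using assms(1) by (rule finite_subset[rotated, OF finite_Pow_iff[THEN iffD2]]) (auto simp: dominating_def)
  have "dominating V adj V" by (simp add: dominating_def)
  then have ne: "card ` {D. dominating V adj D} \<noteq> {}" by blast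
  show ?thesis unfolding domination_number_def using fin ne assms(2) by (subst Min_ge_iff) auto
qed

fun chk :: "nat \<Rightarrow> nat \<Rightarrow> ('a \<times> 'a list) list \<Rightarrow> bool"
and chks :: "nat \<Rightarrow> nat \<Rightarrow> ('a \<times> 'a list) list \<Rightarrow> 'a list \<Rightarrow> bool" where
  "chk B k [] = False"
| "chk B 0 (p # P) = True"
| "chk B (Suc k) (p # P) = (if B * Suc k < Suc (length P) then True else chks B k (p # P) (snd p))"
| "chks B k P [] = True"
| "chks B k P (w # ws) = (if chk B k (filter (\<lambda>q. w \<notin> set (snd q)) P) then chks B k P ws else False)"

lemma chks_iff: "chks B k P ws \<longleftrightarrow> list_all (\<lambda>w. chk B k (filter (\<lambda>q. w \<notin> set (snd q)) P)) ws"
  by (induction ws) auto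

lemma chk_Suc: "chk B (Suc k) (p # P) = (B * Suc k < Suc (length P) \<or>
      list_all (\<lambda>w. chk B k (filter (\<lambda>q. w \<notin> set (snd q)) (p # P))) (snd p))"
  by (simp add: chks_iff)

lemma chk_sound:
  "chk B k P \<Longrightarrow> finite S \<Longrightarrow> card S \<le> k \<Longrightarrow> distinct P \<Longrightarrow>
   (\<forall>s\<in>S. card {p \<in> set P. s \<in> set (snd p)} \<le> B) \<Longrightarrow>
   (\<forall>p\<in>set P. \<exists>s\<in>S. s \<in> set (snd p)) \<Longrightarrow> False"
proof (induction k arbitrary: P S)
  case 0
  then obtain p P' where P: "P = p # P'" by (cases P) auto
  have "S = {}" using 0 by simp
  then show ?case using "0.prems"(6) P by (metis empty_iff list.set_intros(1))
next
  case (Suc k)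
  then obtain p P' where P: "P = p # P'" by (cases P) auto
  let ?Q = "p # P'"
  have c0: "chk B (Suc k) ?Q" using Suc.prems(1) P by simp
  have fin: "finite S" and cS: "card S \<le> Suc k" and dQ: "distinct ?Q"
    and bQ: "\<forall>s\<in>S. card {q \<in> set ?Q. s \<in> set (snd q)} \<le> B"
    and cov: "\<forall>q\<in>set ?Q. \<exists>s\<in>S. s \<in> set (snd q)" using Suc.prems P by auto
  show ?case
  proof (cases "B * Suc k < Suc (length P')")
    case True
    have sub: "set ?Q \<subseteq> (\<Union>s\<in>S. {q \<in> set ?Q. s \<in> set (snd q)})" using cov by blast
    have "length ?Q = card (set ?Q)" using dQ by (simp add: distinct_card)
    also have "\<dots> \<le> card (\<Union>s\<in>S. {q \<in> set ?Q. s \<in> set (snd q)})"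
      by (rule card_mono[OF _ sub]) (use fin in auto)
    also have "\<dots> \<le> (\<Sum>s\<in>S. card {q \<in> set ?Q. s \<in> set (snd q)})"
      by (rule card_UN_le[OF fin])
    also have "\<dots> \<le> (\<Sum>s\<in>S. B)" by (rule sum_mono) (use bQ in auto)
    also have "\<dots> = card S * B" by simp
    also have "\<dots> \<le> Suc k * B" using cS by (intro mult_right_mono) auto
    finally show False using True by (simp add: mult.commute)
  next
    case False
    then have all: "list_all (\<lambda>w. chk B k (filter (\<lambda>q. w \<notin> set (snd q)) ?Q)) (snd p)"
      using c0 False chk_Suc[of B k p P'] by blast
    obtain s where s: "s \<in> S" "s \<in> set (snd p)" using cov by auto
    have c: "chk B k (filter (\<lambda>q. s \<notin> set (snd q)) ?Q)" using all s(2) by (simp add: list_all_iff)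
    show False
    proof (rule Suc.IH[OF c])
      show "finite (S - {s})" using fin by simp
      show "card (S - {s}) \<le> k" using fin cS s(1) by simp
      show "distinct (filter (\<lambda>q. s \<notin> set (snd q)) ?Q)" using dQ by (metis distinct_filter)
      show "\<forall>s'\<in>S - {s}. card {q \<in> set (filter (\<lambda>q. s \<notin> set (snd q)) ?Q). s' \<in> set (snd q)} \<le> B"
      proof
        fix s' assume "s' \<in> S - {s}"
        then have "card {q \<in> set ?Q. s' \<in> set (snd q)} \<le> B" using bQ by blast
        moreover have "card {q \<in> set (filter (\<lambda>q. s \<notin> set (snd q)) ?Q). s' \<in> set (snd q)}
           \<le> card {q \<in> set ?Q. s' \<in> set (snd q)}" by (rule card_mono) auto
        ultimately show "card {q \<in> set (filter (\<lambda>q. s \<notin> set (snd q)) ?Q). s' \<in> set (snd q)} \<le> B" by linarith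
      qed
      show "\<forall>q\<in>set (filter (\<lambda>q. s \<notin> set (snd q)) ?Q). \<exists>s'\<in>S - {s}. s' \<in> set (snd q)"
      proof
        fix q assume q: "q \<in> set (filter (\<lambda>q. s \<notin> set (snd q)) ?Q)"
        then have "q \<in> set ?Q" by (metis filter_is_subset subsetD)
        then obtain s' where "s' \<in> S" "s' \<in> set (snd q)" using cov by blast
        moreover have "s \<notin> set (snd q)" using q by (metis (mono_tags, lifting) mem_Collect_eq set_filter)
        then have "s' \<noteq> s" using calculation by auto
        ultimately show "\<exists>s'\<in>S - {s}. s' \<in> set (snd q)" by blast
      qed
    qed
  qed
qed

lemma upper:
  assumes W: "set Wl = V" "set Dl \<subseteq> V"
    and c: "list_all (\<lambda>v. v \<in> set Dl \<or> list_ex (adj v) Dl) Wl"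
  shows "domination_number V adj \<le> card (set Dl)"
proof (rule dn_le)
  show "finite V" using W by auto
  show "dominating V adj (set Dl)" using W c unfolding dominating_def
    by (auto simp: list_all_iff list_ex_iff)
qed

fun nb :: "nat \<Rightarrow> nat \<times> nat \<Rightarrow> (nat \<times> nat) list" where
  "nb m (i, j) = (if i = 1 then [(1,j),(2,j),(2,(j+1) mod m),(2,(j+3) mod m),(2,(j+7) mod m)]
      else [(2,j),(1,j),(1,(j+m-1) mod m),(1,(j+m-3) mod m),(1,(j+m-7) mod m)])"

lemma ex4: "(\<exists>k<(4::nat). P k) \<longleftrightarrow> P 0 \<or> P 1 \<or> P 2 \<or> P 3"
  by (auto simp: numeral_eq_Suc less_Suc_eq)

lemma modinv:
  fixes a b t m :: nat
  assumes "a < m" "b < m" "t \<le> m"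
  shows "b = (a + t) mod m \<longleftrightarrow> a = (b + m - t) mod m"
proof -
  have e: "\<And>x. x + m - t = x + (m - t)" using assms(3) by simp
  have gf: "((a + t) mod m + (m - t)) mod m = a"
  proof -
    have "((a + t) mod m + (m - t)) mod m = (a + t + (m - t)) mod m" by (simp add: mod_add_left_eq)
    also have "a + t + (m - t) = a + m" using assms(3) by simp
    finally show ?thesis using assms(1) by simp
  qed
  have fg: "((b + (m - t)) mod m + t) mod m = b"
  proof -
    have "((b + (m - t)) mod m + t) mod m = (b + (m - t) + t) mod m" by (simp add: mod_add_left_eq)
    also have "b + (m - t) + t = b + m" using assms(3) by simp
    finally show ?thesis using assms(2) by simp
  qed
  show ?thesis unfolding e using gf fg by metis
qed

lemma adj_sym: "knodel_adj d n x y = knodel_adj d n y x"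
  unfolding knodel_adj_def by auto

lemma nb_iff:
  assumes m: "n div 2 = m" "8 \<le> m" and v: "v \<in> knodel_vertices n" and s: "s \<in> knodel_vertices n"
  shows "s \<in> set (nb m v) \<longleftrightarrow> s = v \<or> knodel_adj 4 n v s"
proof -
  obtain i j where vij: "v = (i, j)" by force
  obtain i' j' where sij: "s = (i', j')" by force
  have ij: "i = 1 \<or> i = 2" "j < m" using v m vij by (auto simp: knodel_vertices_def)
  have ij': "i' = 1 \<or> i' = 2" "j' < m" using s m sij by (auto simp: knodel_vertices_def)
  have adj: "knodel_adj 4 n v s \<longleftrightarrow>
     (i = 1 \<and> i' = 2 \<and> (j' = (j + 0) mod m \<or> j' = (j + 1) mod m \<or> j' = (j + 3) mod m \<or> j' = (j + 7) mod m)) \<or>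
     (i' = 1 \<and> i = 2 \<and> (j = (j' + 0) mod m \<or> j = (j' + 1) mod m \<or> j = (j' + 3) mod m \<or> j = (j' + 7) mod m))"
    using v s m unfolding knodel_adj_def vij sij ex4 by (simp add: ac_simps)
  have inv: "\<And>t. t \<le> m \<Longrightarrow> j = (j' + t) mod m \<longleftrightarrow> j' = (j + m - t) mod m"
    using modinv ij(2) ij'(2) by blast
  show ?thesis
  proof (cases "i = 1")
    case True
    then show ?thesis unfolding adj using ij ij' vij sij by auto
  next
    case False
    then have i2: "i = 2" using ij by simp
    have A: "knodel_adj 4 n v s \<longleftrightarrow> i' = 1 \<and> (j' = j \<or> j' = (j + m - 1) mod m \<or> j' = (j + m - 3) mod m \<or> j' = (j + m - 7) mod m)"
    proof -
      have "j = (j' + 0) mod m \<longleftrightarrow> j' = j" using ij ij' by auto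
      moreover have "j = (j' + 1) mod m \<longleftrightarrow> j' = (j + m - 1) mod m" using inv[of 1] m by simp
      moreover have "j = (j' + 3) mod m \<longleftrightarrow> j' = (j + m - 3) mod m" using inv[of 3] m by simp
      moreover have "j = (j' + 7) mod m \<longleftrightarrow> j' = (j + m - 7) mod m" using inv[of 7] m by simp
      ultimately show ?thesis unfolding adj using i2 by auto
    qed
    have B: "s \<in> set (nb m v) \<longleftrightarrow> s = v \<or> (i' = 1 \<and> (j' = j \<or> j' = (j + m - 1) mod m \<or> j' = (j + m - 3) mod m \<or> j' = (j + m - 7) mod m))"
      unfolding vij sij using i2 by auto
    show ?thesis using A B by blast
  qed
qed


lemma lower2:
  assumes W: "set Wl = V" "distinct Wl"
    and N: "\<And>v s. v \<in> V \<Longrightarrow> s \<in> V \<Longrightarrow> s \<in> set (N v) \<longleftrightarrow> s = v \<or> adj v s"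
    and sym: "\<And>v s. adj v s \<Longrightarrow> adj s v"
    and NV: "\<And>v. v \<in> V \<Longrightarrow> set (N v) \<subseteq> V"
    and L: "\<And>v. v \<in> V \<Longrightarrow> length (N v) \<le> B"
    and c: "chk B k (map (\<lambda>v. (v, N v)) Wl)"
  shows "Suc k \<le> domination_number V adj"
proof (rule dn_ge)
  show "finite V" using W by auto
  fix D assume d: "dominating V adj D"
  show "Suc k \<le> card D"
  proof (rule ccontr)
    assume "\<not> Suc k \<le> card D"
    then have ck: "card D \<le> k" by simp
    have DV: "D \<subseteq> V" using d by (simp add: dominating_def)
    let ?P = "map (\<lambda>v. (v, N v)) Wl"
    show False
    proof (rule chk_sound[OF c _ ck])
      show "finite D" using DV W(1) by (metis finite_set finite_subset)
      show "distinct ?P" using W(2) by (simp add: distinct_map inj_on_def)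
      show "\<forall>s\<in>D. card {p \<in> set ?P. s \<in> set (snd p)} \<le> B"
      proof
        fix s assume "s \<in> D"
        then have sV: "s \<in> V" using DV by blast
        have PV: "set ?P = (\<lambda>v. (v, N v)) ` V" using W(1) by simp
        have sub: "{p \<in> set ?P. s \<in> set (snd p)} \<subseteq> (\<lambda>v. (v, N v)) ` {v \<in> V. s \<in> set (N v)}"
        proof
          fix p assume p: "p \<in> {p \<in> set ?P. s \<in> set (snd p)}"
          then obtain v where v: "v \<in> V" "p = (v, N v)" using PV by auto
          then have "s \<in> set (N v)" using p by simp
          then show "p \<in> (\<lambda>v. (v, N v)) ` {v \<in> V. s \<in> set (N v)}" using v by blast
        qed
        have finV: "finite V" using W(1) by (metis finite_set)
        have "card {p \<in> set ?P. s \<in> set (snd p)} \<le> card ((\<lambda>v. (v, N v)) ` {v \<in> V. s \<in> set (N v)})"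
          by (rule card_mono[OF _ sub]) (use finV in simp)
        also have "\<dots> \<le> card {v \<in> V. s \<in> set (N v)}"
          by (rule card_image_le) (use finV in simp)
        also have "\<dots> \<le> card (set (N s))"
        proof (rule card_mono)
          show "finite (set (N s))" by simp
          show "{v \<in> V. s \<in> set (N v)} \<subseteq> set (N s)"
          proof
            fix v assume "v \<in> {v \<in> V. s \<in> set (N v)}"
            then have v: "v \<in> V" "s \<in> set (N v)" by auto
            then have "s = v \<or> adj v s" using N[OF v(1) sV] by blast
            then have "v = s \<or> adj s v" using sym by blast
            then show "v \<in> set (N s)" using N[OF sV v(1)] by blast
          qed
        qed
        also have "\<dots> \<le> length (N s)" by (rule card_length)
        also have "\<dots> \<le> B" using L sV by blast
        finally show "card {p \<in> set ?P. s \<in> set (snd p)} \<le> B" .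
      qed
      show "\<forall>p\<in>set ?P. \<exists>s\<in>D. s \<in> set (snd p)"
      proof
        fix p assume "p \<in> set ?P"
        then obtain v where v: "v \<in> V" "p = (v, N v)" using W(1) by auto
        show "\<exists>s\<in>D. s \<in> set (snd p)"
        proof (cases "v \<in> D")
          case True
          have "v \<in> set (N v)" using N[OF v(1) v(1)] by blast
          then show ?thesis using True v(2) by auto
        next
          case False
          then obtain dd where "dd \<in> D" "adj v dd" using d v unfolding dominating_def by blast
          then have "dd \<in> set (N v)" using N[OF v(1)] DV by blast
          then show ?thesis using \<open>dd \<in> D\<close> v(2) by auto
        qed
      qed
    qed
  qed
qed


definition sh :: "nat \<Rightarrow> nat \<Rightarrow> nat \<times> nat \<Rightarrow> nat \<times> nat" where
  "sh m c x = (fst x, (snd x + c) mod m)"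

lemma mod_cancel:
  fixes a b c m :: nat
  shows "(a + c) mod m = (b + c) mod m \<longleftrightarrow> a mod m = b mod m"
  using cong_add_rcancel_nat[of a c b m] unfolding cong_def by simp

lemma sh_adj:
  assumes m: "n div 2 = m" "0 < m" and x: "x \<in> knodel_vertices n" and y: "y \<in> knodel_vertices n"
  shows "knodel_adj d n (sh m c x) (sh m c y) = knodel_adj d n x y"
proof -
  have key: "\<And>a b t. a < m \<Longrightarrow> b < m \<Longrightarrow> ((b + c) mod m = ((a + c) mod m + t) mod m \<longleftrightarrow> b = (a + t) mod m)"
  proof -
    fix a b t :: nat assume ab: "a < m" "b < m"
    have "((a + c) mod m + t) mod m = (a + c + t) mod m" by (simp add: mod_add_left_eq)
    also have "a + c + t = a + t + c" by simp
    finally have "((a + c) mod m + t) mod m = (a + t + c) mod m" .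
    then show "((b + c) mod m = ((a + c) mod m + t) mod m \<longleftrightarrow> b = (a + t) mod m)"
      by (simp only: mod_cancel mod_less[OF ab(2)])
  qed
  have xv: "sh m c x \<in> knodel_vertices n" "sh m c y \<in> knodel_vertices n"
    using x y m by (auto simp: knodel_vertices_def sh_def)
  have xs: "snd x < m" "snd y < m" using x y m by (auto simp: knodel_vertices_def)
  have h1: "\<And>t. ((snd y + c) mod m = ((snd x + c) mod m + t) mod m) \<longleftrightarrow> snd y = (snd x + t) mod m"
    using key xs by simp
  have h2: "\<And>t. ((snd x + c) mod m = ((snd y + c) mod m + t) mod m) \<longleftrightarrow> snd x = (snd y + t) mod m"
    using key xs by simp
  have pw: "\<And>a::nat. \<And>k::nat. a + 2^k - 1 = a + (2^k - 1)"
    by (simp add: add_diff_assoc)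
  show ?thesis unfolding knodel_adj_def m(1) sh_def fst_conv snd_conv
    unfolding pw h1 h2
    by (simp only: xv[unfolded sh_def fst_conv snd_conv] x y simp_thms)
qed

lemma sh_bij:
  assumes m: "n div 2 = m" "0 < m" and u: "u \<in> knodel_vertices n"
  shows "bij_betw (sh m c) (knodel_vertices n - {u}) (knodel_vertices n - {sh m c u})"
proof -
  let ?V = "knodel_vertices n"
  have inj: "inj_on (sh m c) ?V"
  proof
    fix x y assume xy: "x \<in> ?V" "y \<in> ?V" "sh m c x = sh m c y"
    then have "snd x < m" "snd y < m" using m by (auto simp: knodel_vertices_def)
    moreover have "(snd x + c) mod m = (snd y + c) mod m" "fst x = fst y" using xy(3) by (auto simp: sh_def)
    ultimately show "x = y" using mod_cancel by (metis mod_less prod_eqI)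
  qed
  have sub: "sh m c ` ?V \<subseteq> ?V" using m by (auto simp: knodel_vertices_def sh_def)
  have fin: "finite ?V" by (simp add: knodel_vertices_def)
  have im: "sh m c ` ?V = ?V" by (rule endo_inj_surj[OF fin sub inj])
  have "sh m c ` (?V - {u}) = ?V - {sh m c u}"
    using inj u im by (simp add: inj_on_image_set_diff)
  moreover have "inj_on (sh m c) (?V - {u})" using inj by (rule inj_on_subset) auto
  ultimately show ?thesis by (simp add: bij_betw_def)
qed

lemma dn_shift:
  assumes m: "n div 2 = m" "0 < m" and u: "u \<in> knodel_vertices n"
  shows "domination_number (knodel_vertices n - {u}) (knodel_adj d n) =
         domination_number (knodel_vertices n - {sh m c u}) (knodel_adj d n)"
  by (rule dn_bij[OF sh_bij[OF m u], symmetric]) (use sh_adj[OF m] in auto)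


lemma nb_sub:
  assumes "n div 2 = m" "8 \<le> m" "v \<in> knodel_vertices n"
  shows "set (nb m v) \<subseteq> knodel_vertices n"
proof -
  obtain i j where v: "v = (i, j)" by force
  have "i = 1 \<or> i = 2" "j < m" using assms v by (auto simp: knodel_vertices_def)
  then show ?thesis using assms v by (auto simp: knodel_vertices_def)
qed

lemma lowerK:
  assumes m: "n div 2 = m" "8 \<le> m"
    and c: "chk 5 k (map (\<lambda>v. (v, filter (\<lambda>w. w \<notin> U) (nb m v))) (filter (\<lambda>x. x \<notin> U) (List.product [1,2] [0..<m])))"
  shows "Suc k \<le> domination_number (knodel_vertices n - U) (knodel_adj 4 n)"
proof (rule lower2[OF _ _ _ _ _ _ c])
  show "set (filter (\<lambda>x. x \<notin> U) (List.product [1,2] [0..<m])) = knodel_vertices n - U"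
    using m by (auto simp: knodel_vertices_def)
  show "distinct (filter (\<lambda>x. x \<notin> U) (List.product [1,2] [0..<m]))"
    by (intro distinct_filter distinct_product) simp_all
  show "\<And>v s. v \<in> knodel_vertices n - U \<Longrightarrow> s \<in> knodel_vertices n - U \<Longrightarrow>
      s \<in> set (filter (\<lambda>w. w \<notin> U) (nb m v)) \<longleftrightarrow> s = v \<or> knodel_adj 4 n v s"
    using nb_iff[OF m] by auto
  show "\<And>v s. knodel_adj 4 n v s \<Longrightarrow> knodel_adj 4 n s v" using adj_sym by blast
  show "\<And>v. v \<in> knodel_vertices n - U \<Longrightarrow> set (filter (\<lambda>w. w \<notin> U) (nb m v)) \<subseteq> knodel_vertices n - U"
    using nb_sub[OF m] by auto
  show "\<And>v. v \<in> knodel_vertices n - U \<Longrightarrow> length (filter (\<lambda>w. w \<notin> U) (nb m v)) \<le> 5"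
  proof -
    fix v :: "nat \<times> nat"
    have "length (nb m v) = 5" by (cases v) simp
    then show "length (filter (\<lambda>w. w \<notin> U) (nb m v)) \<le> 5" by (metis length_filter_le)
  qed
qed

lemma upperK:
  assumes m: "n div 2 = m" "8 \<le> m"
    and D: "list_all (\<lambda>d. d \<notin> U \<and> (fst d = 1 \<or> fst d = 2) \<and> snd d < m) Dl"
    and c: "list_all (\<lambda>v. list_ex (\<lambda>d. d \<in> set (nb m v)) Dl) (filter (\<lambda>x. x \<notin> U) (List.product [1,2] [0..<m]))"
  shows "domination_number (knodel_vertices n - U) (knodel_adj 4 n) \<le> card (set Dl)"
proof (rule dn_le)
  show "finite (knodel_vertices n - U)" by (simp add: knodel_vertices_def)
  have DV: "set Dl \<subseteq> knodel_vertices n - U" using D m by (auto simp: list_all_iff knodel_vertices_def)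
  show "dominating (knodel_vertices n - U) (knodel_adj 4 n) (set Dl)"
    unfolding dominating_def
  proof (intro conjI ballI)
    show "set Dl \<subseteq> knodel_vertices n - U" by (rule DV)
    fix v assume v: "v \<in> knodel_vertices n - U - set Dl"
    then have vW: "v \<in> set (filter (\<lambda>x. x \<notin> U) (List.product [1,2] [0..<m]))"
      using m by (auto simp: knodel_vertices_def)
    obtain d where d: "d \<in> set Dl" "d \<in> set (nb m v)" using c vW unfolding list_all_iff list_ex_iff by blast
    have "d \<noteq> v" using d v by blast
    then have "knodel_adj 4 n v d" using nb_iff[OF m, of v d] d DV v by blast
    then show "\<exists>d\<in>set Dl. knodel_adj 4 n v d" using d by blast
  qed
qed

lemma stableK:
  assumes m: "n div 2 = m" "0 < m"
    and g1: "domination_number (knodel_vertices n - {(1,0)}) (knodel_adj 4 n) = g"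
    and g2: "domination_number (knodel_vertices n - {(2,0)}) (knodel_adj 4 n) = g"
    and g0: "domination_number (knodel_vertices n) (knodel_adj 4 n) = g"
  shows "gamma_stable (knodel_vertices n) (knodel_adj 4 n)"
  unfolding gamma_stable_def
proof
  fix u assume u: "u \<in> knodel_vertices n"
  obtain i j where uij: "u = (i, j)" by force
  have ij: "i = 1 \<or> i = 2" "j < m" using u uij m by (auto simp: knodel_vertices_def)
  have "sh m (m - j) u = (i, 0)" using uij ij by (simp add: sh_def)
  then have "domination_number (knodel_vertices n - {u}) (knodel_adj 4 n) =
     domination_number (knodel_vertices n - {(i, 0)}) (knodel_adj 4 n)"
    using dn_shift[OF m u, of 4 "m - j"] by simp
  then show "domination_number (knodel_vertices n - {u}) (knodel_adj 4 n) = domination_number (knodel_vertices n) (knodel_adj 4 n)"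
    using ij g1 g2 g0 by auto
qed

lemma chk_num: "chk B (numeral w) (p # P) = (if B * numeral w < Suc (length P) then True else chks B (pred_numeral w) (p # P) (snd p))"
  by (simp add: numeral_eq_Suc)

lemma l8: "[0..<8] = [0,1,2,3,4,5,6,7]" by (simp add: eval_nat_numeral)

lemma l9: "[0..<9] = [0,1,2,3,4,5,6,7,8]" by (simp add: eval_nat_numeral)

lemma l14: "[0..<14] = [0,1,2,3,4,5,6,7,8,9,10,11,12,13]" by (simp add: eval_nat_numeral)

lemma l18: "[0..<18] = [0,1,2,3,4,5,6,7,8,9,10,11,12,13,14,15,16,17]" by (simp add: eval_nat_numeral)

lemma n16: "gamma_stable (knodel_vertices 16) (knodel_adj 4 16)"
proof (rule stableK[where m = 8 and g = 4])
  have "Suc 3 \<le> domination_number (knodel_vertices 16 - {(1,0)}) (knodel_adj 4 16)"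
    apply (rule lowerK) apply simp apply simp apply (unfold l8) by (simp add: chk_num)
  moreover have "domination_number (knodel_vertices 16 - {(1,0)}) (knodel_adj 4 16) \<le> card (set [(1::nat, 1::nat), (1::nat, 2::nat), (1::nat, 4::nat), (2::nat, 6::nat)])"
    apply (rule upperK) apply simp apply simp apply simp apply (unfold l8) by simp
  ultimately show "domination_number (knodel_vertices 16 - {(1,0)}) (knodel_adj 4 16) = 4" by simp
  have "Suc 3 \<le> domination_number (knodel_vertices 16 - {(2,0)}) (knodel_adj 4 16)"
    apply (rule lowerK) apply simp apply simp apply (unfold l8) by (simp add: chk_num)
  moreover have "domination_number (knodel_vertices 16 - {(2,0)}) (knodel_adj 4 16) \<le> card (set [(1::nat, 0::nat), (1::nat, 1::nat), (2::nat, 5::nat), (2::nat, 6::nat)])"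
    apply (rule upperK) apply simp apply simp apply simp apply (unfold l8) by simp
  ultimately show "domination_number (knodel_vertices 16 - {(2,0)}) (knodel_adj 4 16) = 4" by simp
  have "Suc 3 \<le> domination_number (knodel_vertices 16 - {}) (knodel_adj 4 16)"
    apply (rule lowerK) apply simp apply simp apply (unfold l8) by (simp add: chk_num)
  moreover have "domination_number (knodel_vertices 16 - {}) (knodel_adj 4 16) \<le> card (set [(1::nat, 0::nat), (1::nat, 1::nat), (2::nat, 5::nat), (2::nat, 6::nat)])"
    apply (rule upperK) apply simp apply simp apply simp apply (unfold l8) by simp
  ultimately show "domination_number (knodel_vertices 16) (knodel_adj 4 16) = 4" by simp
qed simp_all

lemma n18: "gamma_stable (knodel_vertices 18) (knodel_adj 4 18)"
proof (rule stableK[where m = 9 and g = 4])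
  have "Suc 3 \<le> domination_number (knodel_vertices 18 - {(1,0)}) (knodel_adj 4 18)"
    apply (rule lowerK) apply simp apply simp apply (unfold l9) by (simp add: chk_num)
  moreover have "domination_number (knodel_vertices 18 - {(1,0)}) (knodel_adj 4 18) \<le> card (set [(1::nat, 1::nat), (1::nat, 2::nat), (2::nat, 6::nat), (2::nat, 7::nat)])"
    apply (rule upperK) apply simp apply simp apply simp apply (unfold l9) by simp
  ultimately show "domination_number (knodel_vertices 18 - {(1,0)}) (knodel_adj 4 18) = 4" by simp
  have "Suc 3 \<le> domination_number (knodel_vertices 18 - {(2,0)}) (knodel_adj 4 18)"
    apply (rule lowerK) apply simp apply simp apply (unfold l9) by (simp add: chk_num)
  moreover have "domination_number (knodel_vertices 18 - {(2,0)}) (knodel_adj 4 18) \<le> card (set [(1::nat, 0::nat), (1::nat, 1::nat), (2::nat, 5::nat), (2::nat, 6::nat)])"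
    apply (rule upperK) apply simp apply simp apply simp apply (unfold l9) by simp
  ultimately show "domination_number (knodel_vertices 18 - {(2,0)}) (knodel_adj 4 18) = 4" by simp
  have "Suc 3 \<le> domination_number (knodel_vertices 18 - {}) (knodel_adj 4 18)"
    apply (rule lowerK) apply simp apply simp apply (unfold l9) by (simp add: chk_num)
  moreover have "domination_number (knodel_vertices 18 - {}) (knodel_adj 4 18) \<le> card (set [(1::nat, 0::nat), (1::nat, 1::nat), (2::nat, 5::nat), (2::nat, 6::nat)])"
    apply (rule upperK) apply simp apply simp apply simp apply (unfold l9) by simp
  ultimately show "domination_number (knodel_vertices 18) (knodel_adj 4 18) = 4" by simp
qed simp_all

lemma n28: "gamma_stable (knodel_vertices 28) (knodel_adj 4 28)"
proof (rule stableK[where m = 14 and g = 7])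
  have "Suc 6 \<le> domination_number (knodel_vertices 28 - {(1,0)}) (knodel_adj 4 28)"
    apply (rule lowerK) apply simp apply simp apply (unfold l14) by (simp add: chk_num)
  moreover have "domination_number (knodel_vertices 28 - {(1,0)}) (knodel_adj 4 28) \<le> card (set [(1::nat, 1::nat), (1::nat, 2::nat), (1::nat, 3::nat), (1::nat, 6::nat), (2::nat, 0::nat), (2::nat, 11::nat), (2::nat, 12::nat)])"
    apply (rule upperK) apply simp apply simp apply simp apply (unfold l14) by simp
  ultimately show "domination_number (knodel_vertices 28 - {(1,0)}) (knodel_adj 4 28) = 7" by simp
  have "Suc 6 \<le> domination_number (knodel_vertices 28 - {(2,0)}) (knodel_adj 4 28)"
    apply (rule lowerK) apply simp apply simp apply (unfold l14) by (simp add: chk_num)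
  moreover have "domination_number (knodel_vertices 28 - {(2,0)}) (knodel_adj 4 28) \<le> card (set [(1::nat, 0::nat), (1::nat, 1::nat), (1::nat, 2::nat), (1::nat, 5::nat), (2::nat, 10::nat), (2::nat, 11::nat), (2::nat, 13::nat)])"
    apply (rule upperK) apply simp apply simp apply simp apply (unfold l14) by simp
  ultimately show "domination_number (knodel_vertices 28 - {(2,0)}) (knodel_adj 4 28) = 7" by simp
  have "Suc 6 \<le> domination_number (knodel_vertices 28 - {}) (knodel_adj 4 28)"
    apply (rule lowerK) apply simp apply simp apply (unfold l14) by (simp add: chk_num)
  moreover have "domination_number (knodel_vertices 28 - {}) (knodel_adj 4 28) \<le> card (set [(1::nat, 0::nat), (1::nat, 1::nat), (1::nat, 2::nat), (1::nat, 5::nat), (2::nat, 10::nat), (2::nat, 11::nat), (2::nat, 13::nat)])"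
    apply (rule upperK) apply simp apply simp apply simp apply (unfold l14) by simp
  ultimately show "domination_number (knodel_vertices 28) (knodel_adj 4 28) = 7" by simp
qed simp_all

lemma n36: "gamma_stable (knodel_vertices 36) (knodel_adj 4 36)"
proof (rule stableK[where m = 18 and g = 8])
  have "Suc 7 \<le> domination_number (knodel_vertices 36 - {(1,0)}) (knodel_adj 4 36)"
    apply (rule lowerK) apply simp apply simp apply (unfold l18) by (simp add: chk_num)
  moreover have "domination_number (knodel_vertices 36 - {(1,0)}) (knodel_adj 4 36) \<le> card (set [(1::nat, 1::nat), (1::nat, 2::nat), (1::nat, 10::nat), (1::nat, 11::nat), (2::nat, 6::nat), (2::nat, 7::nat), (2::nat, 15::nat), (2::nat, 16::nat)])"
    apply (rule upperK) apply simp apply simp apply simp apply (unfold l18) by simp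
  ultimately show "domination_number (knodel_vertices 36 - {(1,0)}) (knodel_adj 4 36) = 8" by simp
  have "Suc 7 \<le> domination_number (knodel_vertices 36 - {(2,0)}) (knodel_adj 4 36)"
    apply (rule lowerK) apply simp apply simp apply (unfold l18) by (simp add: chk_num)
  moreover have "domination_number (knodel_vertices 36 - {(2,0)}) (knodel_adj 4 36) \<le> card (set [(1::nat, 0::nat), (1::nat, 1::nat), (1::nat, 9::nat), (1::nat, 10::nat), (2::nat, 5::nat), (2::nat, 6::nat), (2::nat, 14::nat), (2::nat, 15::nat)])"
    apply (rule upperK) apply simp apply simp apply simp apply (unfold l18) by simp
  ultimately show "domination_number (knodel_vertices 36 - {(2,0)}) (knodel_adj 4 36) = 8" by simp
  have "Suc 7 \<le> domination_number (knodel_vertices 36 - {}) (knodel_adj 4 36)"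
    apply (rule lowerK) apply simp apply simp apply (unfold l18) by (simp add: chk_num)
  moreover have "domination_number (knodel_vertices 36 - {}) (knodel_adj 4 36) \<le> card (set [(1::nat, 0::nat), (1::nat, 1::nat), (1::nat, 9::nat), (1::nat, 10::nat), (2::nat, 5::nat), (2::nat, 6::nat), (2::nat, 14::nat), (2::nat, 15::nat)])"
    apply (rule upperK) apply simp apply simp apply simp apply (unfold l18) by simp
  ultimately show "domination_number (knodel_vertices 36) (knodel_adj 4 36) = 8" by simp
qed simp_all

theorem lemma4p3:
  assumes "n \<in> {16, 18, 28, 36}"
  shows "gamma_stable (knodel_vertices n) (knodel_adj 4 n)"
  using assms n16 n18 n28 n36 by auto

end
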